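(* Let $H$ be a Hilbert space (not necessarily separable), let $M \subseteq B(H)$ be a von Neumann algebra, and let $\phi = \{\phi_t\}_{t \geq 0}$ be a CP-semigroup on $M$. For all $\xi \in H$ and $A \in M$, the function $f : [0,1] \to H$ given by $f(t) = \phi_t(A)\xi$ is strongly measurable and Bochner integrable on $[0,1]$.
   Context: A CP-semigroup on a von Neumann algebra $M$ is a family $\phi = \{\phi_t : M \to M\}_{t \geq 0}$ of contractive normal completely positive maps such that $\phi_0(A) = A$ for all $A \in M$, $\phi_{s+t} = \phi_s \circ \phi_t$ for all $s,t \geq 0$, and for all $A \in M$ and all $\omega \in M_*$ (the $\sigma$-weakly continuous linear functionals on $M$), $\lim_{t \to t_0} \omega(\phi_t(A)) = \omega(\phi_{t_0}(A))$ for every $t_0 \geq 0$. A function $g : [0,1] \to H$ is strongly measurable if there exists a sequence of countably-valued functions (each taking at most countably many values) converging to $g$ in norm Lebesgue-almost everywhere. *)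

theory Defs
  imports "HOL-Analysis.Analysis"
begin

text \<open>A complex Hilbert space is encoded as a real Hilbert space (real inner product space,
  complete) together with a complex structure: a real-linear map jmul (multiplication by i)
  with jmul (jmul x) = -x, which is orthogonal for the real inner product.  The complex inner
  product is recovered by cinner below (conjugate-linear in the first, linear in the second
  argument), and the real inner product is its real part.\<close>

class chilbert = real_inner + complete_space +
  fixes jmul :: "'a \<Rightarrow> 'a"
  assumes jmul_add: "jmul (x + y) = jmul x + jmul y"
    and jmul_scaleR: "jmul (r *\<^sub>R x) = r *\<^sub>R jmul x"
    and jmul_jmul: "jmul (jmul x) = - x"
    and inner_jmul: "inner (jmul x) (jmul y) = inner x y"

definition cscale :: "complex \<Rightarrow> 'h::chilbert \<Rightarrow> 'h" where
  "cscale c x = Re c *\<^sub>R x + Im c *\<^sub>R jmul x"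

definition cinner :: "'h::chilbert \<Rightarrow> 'h \<Rightarrow> complex" where
  "cinner x y = Complex (inner x y) (- inner x (jmul y))"

text \<open>B(H): bounded complex-linear operators, i.e. bounded real-linear maps commuting with i.\<close>

definition BH :: "('h::chilbert \<Rightarrow>\<^sub>L 'h) set" where
  "BH = {T. \<forall>x. blinfun_apply T (jmul x) = jmul (blinfun_apply T x)}"

definition opscale :: "complex \<Rightarrow> ('h::chilbert \<Rightarrow>\<^sub>L 'h) \<Rightarrow> ('h \<Rightarrow>\<^sub>L 'h)" where
  "opscale c A = Blinfun (\<lambda>x. cscale c (blinfun_apply A x))"

definition cadj :: "('h::chilbert \<Rightarrow>\<^sub>L 'h) \<Rightarrow> ('h \<Rightarrow>\<^sub>L 'h)" where
  "cadj T = (THE S. S \<in> BH \<and> (\<forall>x y. cinner (blinfun_apply T x) y = cinner x (blinfun_apply S y)))"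

definition commutant :: "('h::chilbert \<Rightarrow>\<^sub>L 'h) set \<Rightarrow> ('h \<Rightarrow>\<^sub>L 'h) set" where
  "commutant S = {T \<in> BH. \<forall>A\<in>S. T o\<^sub>L A = A o\<^sub>L T}"

text \<open>Von Neumann algebra: a self-adjoint subset of B(H) equal to its bicommutant
  (equivalently, by von Neumann's bicommutant theorem, a unital *-subalgebra closed in the
  weak operator topology).\<close>

definition von_neumann_algebra :: "('h::chilbert \<Rightarrow>\<^sub>L 'h) set \<Rightarrow> bool" where
  "von_neumann_algebra M \<longleftrightarrow> M \<subseteq> BH \<and> (\<forall>A\<in>M. cadj A \<in> M) \<and> commutant (commutant M) = M"

definition sigma_weak_topology :: "('h::chilbert \<Rightarrow>\<^sub>L 'h) topology" where
  "sigma_weak_topology = topology_generated_by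
     {(\<lambda>A. \<Sum>n. cinner (xi n) (blinfun_apply A (eta n))) -` U | xi eta U.
        summable (\<lambda>n. (norm (xi n))\<^sup>2) \<and> summable (\<lambda>n. (norm (eta n))\<^sup>2) \<and> open U}"

definition predual :: "('h::chilbert \<Rightarrow>\<^sub>L 'h) set \<Rightarrow> ((('h \<Rightarrow>\<^sub>L 'h) \<Rightarrow> complex) set)" where
  "predual M = {\<omega>. (\<forall>A\<in>M. \<forall>B\<in>M. \<omega> (A + B) = \<omega> A + \<omega> B) \<and>
                     (\<forall>A\<in>M. \<forall>c. \<omega> (opscale c A) = c * \<omega> A) \<and>
                     continuous_map (subtopology sigma_weak_topology M) euclidean \<omega>}"

text \<open>Positivity of an n x n matrix of operators, viewed as an operator on H^n.\<close>

definition op_matrix_pos :: "nat \<Rightarrow> (nat \<Rightarrow> nat \<Rightarrow> ('h::chilbert \<Rightarrow>\<^sub>L 'h)) \<Rightarrow> bool" where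
  "op_matrix_pos n A \<longleftrightarrow> (\<forall>xi :: nat \<Rightarrow> 'h.
     Im (\<Sum>i<n. \<Sum>j<n. cinner (xi i) (blinfun_apply (A i j) (xi j))) = 0 \<and>
     Re (\<Sum>i<n. \<Sum>j<n. cinner (xi i) (blinfun_apply (A i j) (xi j))) \<ge> 0)"

definition contractive_normal_cp_map ::
  "('h::chilbert \<Rightarrow>\<^sub>L 'h) set \<Rightarrow> (('h \<Rightarrow>\<^sub>L 'h) \<Rightarrow> ('h \<Rightarrow>\<^sub>L 'h)) \<Rightarrow> bool" where
  "contractive_normal_cp_map M \<phi> \<longleftrightarrow>
     (\<forall>A\<in>M. \<phi> A \<in> M) \<and>
     (\<forall>A\<in>M. \<forall>B\<in>M. \<phi> (A + B) = \<phi> A + \<phi> B) \<and>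
     (\<forall>A\<in>M. \<forall>c. \<phi> (opscale c A) = opscale c (\<phi> A)) \<and>
     (\<forall>A\<in>M. norm (\<phi> A) \<le> norm A) \<and>
     continuous_map (subtopology sigma_weak_topology M) sigma_weak_topology \<phi> \<and>
     (\<forall>n (A :: nat \<Rightarrow> nat \<Rightarrow> ('h \<Rightarrow>\<^sub>L 'h)).
        (\<forall>i<n. \<forall>j<n. A i j \<in> M) \<longrightarrow> op_matrix_pos n A \<longrightarrow> op_matrix_pos n (\<lambda>i j. \<phi> (A i j)))"

definition cp_semigroup ::
  "('h::chilbert \<Rightarrow>\<^sub>L 'h) set \<Rightarrow> (real \<Rightarrow> ('h \<Rightarrow>\<^sub>L 'h) \<Rightarrow> ('h \<Rightarrow>\<^sub>L 'h)) \<Rightarrow> bool" where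
  "cp_semigroup M \<phi> \<longleftrightarrow>
     (\<forall>t\<ge>0. contractive_normal_cp_map M (\<phi> t)) \<and>
     (\<forall>A\<in>M. \<phi> 0 A = A) \<and>
     (\<forall>s\<ge>0. \<forall>t\<ge>0. \<forall>A\<in>M. \<phi> (s + t) A = \<phi> s (\<phi> t A)) \<and>
     (\<forall>A\<in>M. \<forall>\<omega>\<in>predual M. \<forall>t0\<ge>0.
        ((\<lambda>t. \<omega> (\<phi> t A)) \<longlongrightarrow> \<omega> (\<phi> t0 A)) (at t0 within {0..}))"

definition strongly_measurable_on :: "real set \<Rightarrow> (real \<Rightarrow> 'b::real_normed_vector) \<Rightarrow> bool" where
  "strongly_measurable_on S f \<longleftrightarrow>
     (\<exists>g :: nat \<Rightarrow> real \<Rightarrow> 'b.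
        (\<forall>n. countable (g n ` S) \<and> (\<forall>v. {t\<in>S. g n t = v} \<in> sets lebesgue)) \<and>
        (AE t in lebesgue_on S. (\<lambda>n. g n t) \<longlonglongrightarrow> f t))"

definition bochner_integrable_on :: "real set \<Rightarrow> (real \<Rightarrow> 'b::real_normed_vector) \<Rightarrow> bool" where
  "bochner_integrable_on S f \<longleftrightarrow>
     (\<exists>s :: nat \<Rightarrow> real \<Rightarrow> 'b.
        (\<forall>n. finite (s n ` S) \<and> (\<forall>v. {t\<in>S. s n t = v} \<in> sets lebesgue)) \<and>
        (\<forall>n. (\<lambda>t. norm (f t - s n t)) \<in> borel_measurable (lebesgue_on S)) \<and>
        (\<lambda>n. \<integral>\<^sup>+ t. ennreal (norm (f t - s n t)) \<partial>lebesgue_on S) \<longlonglongrightarrow> 0)"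

end

theory Submission
  imports Defs
begin


lemma norm_jmul: "norm (jmul (x::'h::chilbert)) = norm x"
  by (simp add: norm_eq_sqrt_inner inner_jmul)

lemma bl_jmul: "bounded_linear (jmul :: 'h::chilbert \<Rightarrow> 'h)"
  by (rule bounded_linear_intro[where K=1]) (auto simp: jmul_add jmul_scaleR norm_jmul)

lemma bl_cscale: "bounded_linear (cscale c :: 'h::chilbert \<Rightarrow> 'h)"
proof -
  have "bounded_linear (\<lambda>x::'h. Re c *\<^sub>R x + Im c *\<^sub>R jmul x)"
    by (intro bounded_linear_add bounded_linear_scaleR_right bounded_linear_ident bounded_linear_compose[OF bounded_linear_scaleR_right bl_jmul])
  then show ?thesis unfolding cscale_def[abs_def] by simp
qed

lemma cinner_cscale: "cinner \<eta> (cscale c y) = c * cinner \<eta> (y::'h::chilbert)"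
  by (rule complex_eqI) (simp_all add: cinner_def cscale_def inner_add_right jmul_add jmul_scaleR jmul_jmul algebra_simps)

lemma cinner_add_right: "cinner \<eta> (y + z) = cinner \<eta> y + cinner \<eta> (z::'h::chilbert)"
  by (rule complex_eqI) (simp_all add: cinner_def inner_add_right jmul_add)

lemma cinner_zero_left[simp]: "cinner 0 (y::'h::chilbert) = 0"
  by (simp add: cinner_def complex_eq_iff)

lemma Re_cinner: "Re (cinner x y) = inner x y"
  by (simp add: cinner_def)

lemma vec_predual:
  fixes \<eta> \<xi> :: "'h::chilbert"
  shows "(\<lambda>B. cinner \<eta> (blinfun_apply B \<xi>)) \<in> predual M"
proof -
  define \<omega> where "\<omega> = (\<lambda>B::'h\<Rightarrow>\<^sub>L'h. cinner \<eta> (blinfun_apply B \<xi>))"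
  define xi where "xi = (\<lambda>n::nat. if n = 0 then \<eta> else 0)"
  define eta where "eta = (\<lambda>n::nat. if n = 0 then \<xi> else 0)"
  have sq: "summable (\<lambda>n. (norm (xi n))\<^sup>2)" "summable (\<lambda>n. (norm (eta n))\<^sup>2)"
  proof -
    have "(\<lambda>n. (norm (xi n))\<^sup>2) = (\<lambda>n. if n = 0 then (norm \<eta>)\<^sup>2 else 0)" unfolding xi_def by auto
    then show "summable (\<lambda>n. (norm (xi n))\<^sup>2)" using summable_single[of 0 "\<lambda>_. (norm \<eta>)\<^sup>2"] by simp
    have "(\<lambda>n. (norm (eta n))\<^sup>2) = (\<lambda>n. if n = 0 then (norm \<xi>)\<^sup>2 else 0)" unfolding eta_def by auto
    then show "summable (\<lambda>n. (norm (eta n))\<^sup>2)" using summable_single[of 0 "\<lambda>_. (norm \<xi>)\<^sup>2"] by simp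
  qed
  have sumeq: "(\<lambda>B::'h\<Rightarrow>\<^sub>L'h. \<Sum>n. cinner (xi n) (blinfun_apply B (eta n))) = \<omega>"
  proof
    fix B :: "'h\<Rightarrow>\<^sub>L'h"
    have "(\<lambda>n. cinner (xi n) (blinfun_apply B (eta n))) = (\<lambda>n. if n = 0 then \<omega> B else 0)"
      unfolding xi_def eta_def \<omega>_def by auto
    then show "(\<Sum>n. cinner (xi n) (blinfun_apply B (eta n))) = \<omega> B"
      using sums_unique[OF sums_single[of 0 "\<lambda>_. \<omega> B"]] by simp
  qed
  have opn: "openin sigma_weak_topology (\<omega> -` U)" if "open U" for U
  proof -
    have "\<omega> -` U \<in> {(\<lambda>A. \<Sum>n. cinner (xi n) (blinfun_apply A (eta n))) -` U | xi eta U.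
        summable (\<lambda>n. (norm (xi n))\<^sup>2) \<and> summable (\<lambda>n. (norm (eta n))\<^sup>2) \<and> open U}"
      using sq that sumeq by blast
    then show ?thesis unfolding sigma_weak_topology_def by (rule topology_generated_by_Basis)
  qed
  have top: "topspace (sigma_weak_topology :: ('h\<Rightarrow>\<^sub>L'h) topology) = UNIV"
    using opn[of UNIV] openin_subset by auto
  have cont: "continuous_map sigma_weak_topology euclidean \<omega>"
    unfolding continuous_map_def using opn top by (auto simp: open_openin[symmetric] vimage_def)
  have add: "\<omega> (A + B) = \<omega> A + \<omega> B" for A B
    unfolding \<omega>_def by (simp add: plus_blinfun.rep_eq cinner_add_right)
  have sc: "\<omega> (opscale c A) = c * \<omega> A" for c A
  proof -
    have "bounded_linear (\<lambda>x. cscale c (blinfun_apply A x))"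
      by (rule bounded_linear_compose[OF bl_cscale blinfun.bounded_linear_right])
    then show ?thesis unfolding \<omega>_def opscale_def
      by (simp add: bounded_linear_Blinfun_apply cinner_cscale)
  qed
  show ?thesis unfolding predual_def \<omega>_def[symmetric]
    using add sc continuous_map_from_subtopology[OF cont] by auto
qed



lemma parallelo:
  fixes x a b :: "'a::real_inner"
  shows "(norm (a - b))^2 = 2*(norm (x-a))^2 + 2*(norm (x-b))^2 - 4*(norm (x - (1/2) *\<^sub>R (a+b)))^2"
  by (simp add: power2_norm_eq_inner inner_diff_left inner_diff_right inner_add_left inner_add_right inner_commute algebra_simps)

lemma key_closure:
  fixes Q :: "'a::{real_inner,complete_space} set" and x :: 'a
  assumes Q0: "0 \<in> Q" and Qc: "\<And>a b r. a \<in> Q \<Longrightarrow> b \<in> Q \<Longrightarrow> r \<in> \<rat> \<Longrightarrow> a + r *\<^sub>R b \<in> Q"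
  and H: "\<And>\<eta>. (\<forall>q\<in>Q. inner \<eta> q = 0) \<Longrightarrow> inner \<eta> x = 0"
  shows "x \<in> closure Q"
proof -
  define \<delta> where "\<delta> = infdist x Q"
  have \<delta>le: "\<And>q. q\<in>Q \<Longrightarrow> \<delta> \<le> dist x q" unfolding \<delta>_def by (rule infdist_le)
  have \<delta>0: "0 \<le> \<delta>" unfolding \<delta>_def by (rule infdist_nonneg)
  have appr: "\<exists>q\<in>Q. dist x q < \<delta> + e" if "e > 0" for e
  proof (rule ccontr)
    assume "\<not> ?thesis"
    then have "\<And>q. q \<in> Q \<Longrightarrow> \<delta> + e \<le> dist x q" by force
    then have "\<delta> + e \<le> (INF q\<in>Q. dist x q)" using Q0 by (intro cINF_greatest) auto
    then show False using that infdist_notempty[of Q x] Q0 unfolding \<delta>_def by auto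
  qed
  have "\<forall>n. \<exists>q. q \<in> Q \<and> dist x q < \<delta> + 1/(real n + 1)"
    using appr by (metis add_pos_pos zero_less_divide_1_iff zero_less_one of_nat_0_le_iff le_add_same_cancel2 less_le_trans linorder_not_le zero_le_one)
  then obtain w where w: "\<And>n. w n \<in> Q" "\<And>n. dist x (w n) < \<delta> + 1/(real n + 1)"
    by metis
  have mid: "(1/2) *\<^sub>R (a + b) \<in> Q" if "a \<in> Q" "b \<in> Q" for a b
  proof -
    have "0 + (1/2) *\<^sub>R a \<in> Q" using Qc[OF Q0 that(1)] by simp
    then have "(0 + (1/2) *\<^sub>R a) + (1/2) *\<^sub>R b \<in> Q" using Qc that(2) by simp
    then show ?thesis by (simp add: scaleR_add_right)
  qed
  have cauchy: "Cauchy w"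
  proof (rule metric_CauchyI)
    fix e :: real assume e: "0 < e"
    define c where "c = e^2 / (8*\<delta> + 4)"
    have c0: "c > 0" using e \<delta>0 unfolding c_def by auto
    obtain N where N: "inverse (real (Suc N)) < min c 1" using reals_Archimedean[of "min c 1"] c0 by auto
    have "dist (w m) (w n) < e" if "m \<ge> N" "n \<ge> N" for m n
    proof -
      define \<eta> where "\<eta> = inverse (real (Suc N))"
      have \<eta>0: "0 < \<eta>" unfolding \<eta>_def by simp
      have bnd: "1/(real k + 1) \<le> \<eta>" if "k \<ge> N" for k
        unfolding \<eta>_def using that by (simp add: divide_simps)
      have am: "norm (x - w m) < \<delta> + \<eta>" using w(2)[of m] bnd[OF that(1)] by (simp add: dist_norm)
      have an: "norm (x - w n) < \<delta> + \<eta>" using w(2)[of n] bnd[OF that(2)] by (simp add: dist_norm)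
      have cm: "\<delta> \<le> norm (x - (1/2) *\<^sub>R (w m + w n))" using \<delta>le[OF mid[OF w(1) w(1)]] by (simp add: dist_norm)
      have sq1: "(norm (x - w m))^2 \<le> (\<delta>+\<eta>)^2" using am by (intro power_mono) auto
      have sq2: "(norm (x - w n))^2 \<le> (\<delta>+\<eta>)^2" using an by (intro power_mono) auto
      have sq3: "\<delta>^2 \<le> (norm (x - (1/2) *\<^sub>R (w m + w n)))^2" using cm \<delta>0 by (intro power_mono) auto
      have "(norm (w m - w n))^2 \<le> 4*(\<delta>+\<eta>)^2 - 4*\<delta>^2"
        using parallelo[of "w m" "w n" x] sq1 sq2 sq3 by linarith
      also have "\<dots> = \<eta> * (8*\<delta> + 4*\<eta>)" by (simp add: power2_eq_square algebra_simps)
      also have "\<dots> \<le> \<eta> * (8*\<delta> + 4)" using N \<eta>0 unfolding \<eta>_def by (intro mult_left_mono) auto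
      also have "\<dots> < c * (8*\<delta> + 4)" using N \<delta>0 unfolding \<eta>_def by (intro mult_strict_right_mono) auto
      also have "\<dots> = e^2" unfolding c_def using \<delta>0 by simp
      finally have "(norm (w m - w n))^2 < e^2" .
      then have "norm (w m - w n) < e" using e by (simp add: power_less_imp_less_base)
      then show ?thesis by (simp add: dist_norm)
    qed
    then show "\<exists>M. \<forall>m\<ge>M. \<forall>n\<ge>M. dist (w m) (w n) < e" by blast
  qed
  then obtain p where p: "w \<longlonglongrightarrow> p" using Cauchy_convergent_iff convergent_def by blast
  define u where "u = x - p"
  have unorm: "norm u \<le> \<delta>"
  proof (rule field_le_epsilon)
    fix e :: real assume e: "0 < e"
    obtain N1 where N1: "\<And>n. n \<ge> N1 \<Longrightarrow> dist (w n) p < e/2"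
      using p e unfolding lim_sequentially by (metis half_gt_zero)
    obtain N2 where N2: "inverse (real (Suc N2)) < e/2" using reals_Archimedean[of "e/2"] e by auto
    define n where "n = max N1 N2"
    have "1/(real n + 1) \<le> inverse (real (Suc N2))" unfolding n_def by (simp add: divide_simps)
    then have "dist x (w n) < \<delta> + e/2" using w(2)[of n] N2 by linarith
    moreover have "dist (w n) p < e/2" using N1 unfolding n_def by simp
    ultimately have "dist x p < \<delta> + e" using dist_triangle[of x p "w n"] by linarith
    then show "norm u \<le> \<delta> + e" unfolding u_def by (simp add: dist_norm)
  qed
  have var: "\<delta> \<le> norm (u - r *\<^sub>R v)" if "v \<in> Q" "r \<in> \<rat>" for v r
  proof -
    have "(\<lambda>n. dist x (w n + r *\<^sub>R v)) \<longlonglongrightarrow> dist x (p + r *\<^sub>R v)"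
      by (intro tendsto_intros p)
    moreover have "\<forall>n. \<delta> \<le> dist x (w n + r *\<^sub>R v)" using \<delta>le Qc w(1) that by blast
    ultimately have "\<delta> \<le> dist x (p + r *\<^sub>R v)" by (meson LIMSEQ_le_const)
    then show ?thesis unfolding u_def by (simp add: dist_norm algebra_simps)
  qed
  have ineq: "2 * r * inner u v \<le> r^2 * inner v v" if "v \<in> Q" "r \<in> \<rat>" for v r
  proof -
    have "(norm u)^2 \<le> (norm (u - r *\<^sub>R v))^2"
      using var[OF that] unorm by (intro power_mono) auto
    then have "inner u u \<le> inner (u - r *\<^sub>R v) (u - r *\<^sub>R v)" by (simp only: power2_norm_eq_inner)
    then show ?thesis
      by (simp add: inner_diff_left inner_diff_right inner_commute power2_eq_square algebra_simps)
  qed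
  have nonpos: "inner u v \<le> 0" if "v \<in> Q" for v
  proof (rule ccontr)
    define a where "a = inner u v"
    define b where "b = inner v v"
    assume "\<not> inner u v \<le> 0"
    then have a0: "a > 0" unfolding a_def by simp
    have b0: "b \<ge> 0" unfolding b_def by simp
    have "0 < 2*a/(b+1)" using a0 b0 by simp
    then obtain r where r: "r \<in> \<rat>" "0 < r" "r < 2*a/(b+1)" using Rats_dense_in_real by blast
    have "r * b \<le> (2*a/(b+1)) * b" using r b0 by (intro mult_right_mono) auto
    also have "\<dots> < 2*a" using a0 b0 by (simp add: divide_simps)
    finally have "r * (r*b) < r * (2*a)" using r by simp
    moreover have "2 * r * a \<le> r^2 * b" using ineq[OF that r(1)] unfolding a_def b_def .
    ultimately show False by (simp add: power2_eq_square algebra_simps)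
  qed
  have orth: "inner u v = 0" if "v \<in> Q" for v
  proof -
    have "0 + (-1) *\<^sub>R v \<in> Q" using Qc[OF Q0 that, of "-1"] by simp
    then have "-v \<in> Q" by simp
    then have "inner u (-v) \<le> 0" by (rule nonpos)
    then show ?thesis using nonpos[OF that] by simp
  qed
  have ux: "inner u x = 0" using H orth by blast
  have "(\<lambda>n. inner u (w n)) \<longlonglongrightarrow> inner u p" by (intro tendsto_intros p)
  moreover have "(\<lambda>n. inner u (w n)) = (\<lambda>n. 0)" using orth w(1) by auto
  ultimately have "(\<lambda>n. 0::real) \<longlonglongrightarrow> inner u p" by simp
  then have up: "inner u p = 0" by (simp add: LIMSEQ_const_iff)
  have "inner u u = 0" using ux up unfolding u_def by (simp add: inner_diff_right)
  then have "x = p" unfolding u_def by simp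
  then show ?thesis using p w(1) closure_sequential by blast
qed



primrec qs :: "'a::real_vector set \<Rightarrow> nat \<Rightarrow> 'a set" where
  "qs B 0 = insert 0 B"
| "qs B (Suc n) = (\<lambda>(a,b,r). a + r *\<^sub>R b) ` (qs B n \<times> qs B n \<times> \<rat>)"

lemma qs_Suc_mono: "qs B n \<subseteq> qs B (Suc n)"
proof
  fix a assume "a \<in> qs B n"
  then have "(a, a, 0) \<in> qs B n \<times> qs B n \<times> \<rat>" by simp
  then have "(\<lambda>(a,b,r). a + r *\<^sub>R b) (a, a, 0::real) \<in> qs B (Suc n)" unfolding qs.simps by (rule imageI)
  then show "a \<in> qs B (Suc n)" by simp
qed

lemma qs_mono: "m \<le> n \<Longrightarrow> qs B m \<subseteq> qs B n"
  by (metis lift_Suc_mono_le qs_Suc_mono)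

lemma qs_countable: "countable B \<Longrightarrow> countable (qs B n)"
  by (induction n) (auto intro!: countable_SIGMA countable_rat)

lemma qs_closed:
  assumes "a \<in> (\<Union>n. qs B n)" "b \<in> (\<Union>n. qs B n)" "r \<in> \<rat>"
  shows "a + r *\<^sub>R b \<in> (\<Union>n. qs B n)"
proof -
  obtain m k where a: "a \<in> qs B m" and b: "b \<in> qs B k" using assms by auto
  have "a \<in> qs B (max m k)" "b \<in> qs B (max m k)" using a b qs_mono[of m "max m k"] qs_mono[of k "max m k"] by auto
  then have "(a, b, r) \<in> qs B (max m k) \<times> qs B (max m k) \<times> \<rat>" using assms(3) by simp
  then have "(\<lambda>(a,b,r). a + r *\<^sub>R b) (a, b, r) \<in> qs B (Suc (max m k))" unfolding qs.simps by (rule imageI)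
  then have "a + r *\<^sub>R b \<in> qs B (Suc (max m k))" by simp
  then show ?thesis by blast
qed

lemma sup_norm:
  fixes Q :: "'a::real_inner set" and y :: 'a
  assumes "Q \<noteq> {}" and ap: "\<And>\<epsilon>. \<epsilon> > 0 \<Longrightarrow> \<exists>q\<in>Q. norm (y - q) < \<epsilon>"
  shows "(norm y)^2 = (SUP q\<in>Q. 2 * inner q y - (norm q)^2)"
proof -
  have id: "(norm y)^2 - (2 * inner q y - (norm q)^2) = (norm (y - q))^2" for q
    by (simp add: power2_norm_eq_inner inner_diff_left inner_diff_right inner_commute algebra_simps)
  have le: "2 * inner q y - (norm q)^2 \<le> (norm y)^2" for q
    using id[of q] by (metis diff_ge_0_iff_ge zero_le_power2)
  have bdd: "bdd_above ((\<lambda>q. 2 * inner q y - (norm q)^2) ` Q)" using le by (rule bdd_aboveI2)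
  show ?thesis
  proof (rule antisym)
    show "(SUP q\<in>Q. 2 * inner q y - (norm q)^2) \<le> (norm y)^2"
      using assms(1) le by (intro cSUP_least) auto
    show "(norm y)^2 \<le> (SUP q\<in>Q. 2 * inner q y - (norm q)^2)"
    proof (rule field_le_epsilon)
      fix e :: real assume e: "0 < e"
      obtain q where q: "q \<in> Q" "norm (y - q) < sqrt e" using ap[of "sqrt e"] e by auto
      have "(norm (y - q))^2 < e" using power_strict_mono[OF q(2) norm_ge_zero, of 2] e by simp
      then have "(norm y)^2 < 2 * inner q y - (norm q)^2 + e" using id[of q] by linarith
      also have "2 * inner q y - (norm q)^2 \<le> (SUP q\<in>Q. 2 * inner q y - (norm q)^2)"
        using bdd q(1) by (rule cSUP_upper2) simp
      finally show "(norm y)^2 \<le> (SUP q\<in>Q. 2 * inner q y - (norm q)^2) + e" by simp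
    qed
  qed
qed



lemma sets_lebesgue_on_S:
  assumes "S \<in> sets lebesgue" "A \<in> sets (lebesgue_on S)"
  shows "A \<in> sets lebesgue"
  using assms sets_restrict_space_iff[of S lebesgue A] by auto

lemma main_generic:
  fixes f :: "real \<Rightarrow> 'h::{real_inner,complete_space}" and C :: real
  assumes wc: "\<And>\<eta>. continuous_on {0..1} (\<lambda>t. inner \<eta> (f t))"
    and bnd: "\<And>t. t \<in> {0..1} \<Longrightarrow> norm (f t) \<le> C"
  shows "strongly_measurable_on {0..1} f \<and> bochner_integrable_on {0..1} f"
proof -
  define S :: "real set" where "S = {0..1}"
  have Sleb: "S \<in> sets lebesgue" unfolding S_def by simp
  have spaceL: "space (lebesgue_on S) = S" by (simp add: S_def)
  define T where "T = \<rat> \<inter> S"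
  have cT: "countable T" unfolding T_def using countable_rat by auto
  have clT: "closure T = S"
  proof
    show "closure T \<subseteq> S" unfolding T_def S_def by (intro closure_minimal) auto
    show "S \<subseteq> closure T"
    proof
      fix t assume t: "t \<in> S"
      show "t \<in> closure T" unfolding closure_approachable
      proof (intro allI impI)
        fix e :: real assume e: "0 < e"
        show "\<exists>y\<in>T. dist y t < e"
        proof (cases "t < 1")
          case True
          obtain r where r: "r \<in> \<rat>" "t < r" "r < min (t+e) 1" using Rats_dense_in_real[of t "min (t+e) 1"] True e by auto
          then have "r \<in> T" "dist r t < e" using t unfolding T_def S_def by (auto simp: dist_real_def)
          then show ?thesis by blast
        next
          case False
          then have t1: "t = 1" using t unfolding S_def by auto
          obtain r where r: "r \<in> \<rat>" "max (1-e) 0 < r" "r < 1" using Rats_dense_in_real[of "max (1-e) 0" 1] e by auto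
          then have "r \<in> T" "dist r t < e" using t1 unfolding T_def S_def by (auto simp: dist_real_def)
          then show ?thesis by blast
        qed
      qed
    qed
  qed
  define Q where "Q = (\<Union>n. qs (f ` T) n)"
  have Q0: "0 \<in> Q" unfolding Q_def by (rule UN_I[of 0]) auto
  have QT: "f ` T \<subseteq> Q" unfolding Q_def using UN_upper[of 0 UNIV "qs (f ` T)"] by auto
  have Qc: "\<And>a b r. a \<in> Q \<Longrightarrow> b \<in> Q \<Longrightarrow> r \<in> \<rat> \<Longrightarrow> a + r *\<^sub>R b \<in> Q"
    unfolding Q_def by (rule qs_closed)
  have cQ: "countable Q" unfolding Q_def using cT by (intro countable_UN qs_countable) auto
  have fcl: "f t \<in> closure Q" if t: "t \<in> S" for t
  proof (rule key_closure[OF Q0 Qc])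
    fix \<eta> assume orth: "\<forall>q\<in>Q. inner \<eta> q = 0"
    have c1: "continuous_on (closure T) (\<lambda>t. inner \<eta> (f t))" using wc clT unfolding S_def by simp
    have c2: "\<And>s. s \<in> T \<Longrightarrow> inner \<eta> (f s) = 0" using orth QT by auto
    have c3: "t \<in> closure T" using t clT by simp
    show "inner \<eta> (f t) = 0" using continuous_constant_on_closure[of T "\<lambda>t. inner \<eta> (f t)" 0 t, OF c1 c2 c3] by simp
  qed auto
  define e where "e = from_nat_into Q"
  have re: "range e = Q" unfolding e_def using Q0 cQ by (intro range_from_nat_into) auto
  have eQ: "e k \<in> Q" for k using re by auto
  have approxQ: "\<exists>q\<in>Q. norm (f t - q) < \<epsilon>" if "t \<in> S" "\<epsilon> > 0" for t \<epsilon>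
    using fcl[OF that(1)] that(2) unfolding closure_approachable by (auto simp: dist_norm norm_minus_commute)
  have approx: "\<exists>k. norm (f t - e k) \<le> \<epsilon>" if ts: "t \<in> S" and ep: "\<epsilon> > 0" for t \<epsilon>
  proof -
    obtain q where q: "q \<in> Q" "norm (f t - q) < \<epsilon>" using approxQ[OF ts ep] by blast
    then obtain k where "q = e k" using re by blast
    then show ?thesis using q by (intro exI[of _ k]) simp
  qed
  have hmeas: "(\<lambda>t. norm (f t - c)) \<in> borel_measurable (lebesgue_on S)" if c: "c \<in> Q" for c
  proof -
    define F where "F = (\<lambda>q t. 2 * inner q (f t - c) - (norm q)^2)"
    have Fm: "F q \<in> borel_measurable (lebesgue_on S)" for q
    proof -
      have "F q = (\<lambda>t. 2 * (inner q (f t) - inner q c) - (norm q)^2)" unfolding F_def by (simp add: inner_diff_right)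
      moreover have "continuous_on S (\<lambda>t. 2 * (inner q (f t) - inner q c) - (norm q)^2)" unfolding S_def
        by (rule continuous_on_diff[OF continuous_on_mult[OF continuous_on_const continuous_on_diff[OF wc continuous_on_const]] continuous_on_const])
      ultimately have "continuous_on S (F q)" by simp
      then show ?thesis using Sleb by (rule continuous_imp_measurable_on_sets_lebesgue)
    qed
    have eq: "(norm (f t - c))^2 = (SUP q\<in>Q. F q t)" if t: "t \<in> S" for t
      unfolding F_def
    proof (rule sup_norm)
      show "Q \<noteq> {}" using Q0 by auto
      fix \<epsilon> :: real assume "\<epsilon> > 0"
      then obtain q where q: "q \<in> Q" "norm (f t - q) < \<epsilon>" using approxQ t by blast
      have "q + (-1) *\<^sub>R c \<in> Q" using Qc[OF q(1) c, of "-1"] by simp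
      moreover have "norm (f t - c - (q + (-1) *\<^sub>R c)) < \<epsilon>" using q(2) by (simp add: algebra_simps)
      ultimately show "\<exists>q\<in>Q. norm (f t - c - q) < \<epsilon>" by blast
    qed
    have bddF: "bdd_above ((\<lambda>q. F q t) ` Q)" for t
    proof (rule bdd_aboveI2)
      fix q
      have "(norm (f t - c))^2 - F q t = (norm (f t - c - q))^2"
        unfolding F_def by (simp add: power2_norm_eq_inner inner_diff_left inner_diff_right inner_commute algebra_simps)
      then show "F q t \<le> (norm (f t - c))^2" by (metis diff_ge_0_iff_ge zero_le_power2)
    qed
    have supm: "(\<lambda>t. SUP q\<in>Q. F q t) \<in> borel_measurable (lebesgue_on S)"
      using cQ Fm bddF by (intro borel_measurable_cSUP) auto
    have "(\<lambda>t. sqrt (SUP q\<in>Q. F q t)) \<in> borel_measurable (lebesgue_on S)"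
      using supm by measurable
    moreover have "\<And>t. t \<in> space (lebesgue_on S) \<Longrightarrow> sqrt (SUP q\<in>Q. F q t) = norm (f t - c)"
    proof -
      fix t assume "t \<in> space (lebesgue_on S)"
      then have "(SUP q\<in>Q. F q t) = (norm (f t - c))^2" using eq spaceL by simp
      then show "sqrt (SUP q\<in>Q. F q t) = norm (f t - c)" by simp
    qed
    ultimately show ?thesis using measurable_cong[of "lebesgue_on S" "\<lambda>t. sqrt (SUP q\<in>Q. F q t)" "\<lambda>t. norm (f t - c)" borel] by simp
  qed
  have hm[measurable]: "(\<lambda>t. norm (f t - e k)) \<in> borel_measurable (lebesgue_on S)" for k
    using hmeas eQ by blast
  define K where "K = (\<lambda>n t. LEAST k. norm (f t - e k) \<le> inverse (real (Suc n)))"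
  have Km[measurable]: "K n \<in> measurable (lebesgue_on S) (count_space UNIV)" for n
  proof -
    have "(\<lambda>t. norm (f t - e i) \<le> inverse (real (Suc n))) \<in> measurable (lebesgue_on S) (count_space UNIV)" for i
      unfolding pred_def by (rule borel_measurable_le[OF hm borel_measurable_const])
    then show ?thesis unfolding K_def by (rule measurable_Least)
  qed
  have Kp: "norm (f t - e (K n t)) \<le> inverse (real (Suc n))" if "t \<in> S" for n t
    unfolding K_def using approx[OF that, of "inverse (real (Suc n))"] by (rule LeastI_ex) simp
  have levelset: "{t\<in>S. h t = v} \<in> sets lebesgue" if hm: "h \<in> measurable (lebesgue_on S) (count_space UNIV)" for h :: "real \<Rightarrow> 'h" and v
  proof -
    have "h -` {v} \<inter> space (lebesgue_on S) \<in> sets (lebesgue_on S)"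
      using measurable_sets[OF hm, of "{v}"] by simp
    moreover have "h -` {v} \<inter> space (lebesgue_on S) = {t\<in>S. h t = v}" using spaceL by auto
    ultimately have "{t\<in>S. h t = v} \<in> sets (lebesgue_on S)" by simp
    then show ?thesis by (rule sets_lebesgue_on_S[OF Sleb])
  qed
  define g where "g = (\<lambda>n t. e (K n t))"
  have gm: "g n \<in> measurable (lebesgue_on S) (count_space UNIV)" for n
    unfolding g_def by (rule measurable_compose[OF Km measurable_count_space])
  have SM: "strongly_measurable_on S f"
    unfolding strongly_measurable_on_def
  proof (intro exI conjI allI)
    fix n v
    have "g n ` S \<subseteq> Q" using eQ unfolding g_def by auto
    then show "countable (g n ` S)" using cQ by (rule countable_subset)
    show "{t\<in>S. g n t = v} \<in> sets lebesgue" by (rule levelset[OF gm])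
  next
    show "AE t in lebesgue_on S. (\<lambda>n. g n t) \<longlonglongrightarrow> f t"
    proof (rule AE_I2)
      fix t assume "t \<in> space (lebesgue_on S)"
      then have t: "t \<in> S" using spaceL by simp
      show "(\<lambda>n. g n t) \<longlonglongrightarrow> f t"
      proof (rule metric_LIMSEQ_I)
        fix r :: real assume r: "0 < r"
        obtain N where N: "inverse (real (Suc N)) < r" using reals_Archimedean[OF r] by auto
        have "dist (g n t) (f t) < r" if "n \<ge> N" for n
        proof -
          have a: "inverse (real (Suc n)) \<le> inverse (real (Suc N))" using that by (simp add: divide_simps)
          have "norm (f t - g n t) < r" using Kp[OF t, of n] a N unfolding g_def by linarith
          then show ?thesis by (simp add: dist_norm norm_minus_commute)
        qed
        then show "\<exists>N. \<forall>n\<ge>N. dist (g n t) (f t) < r" by blast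
      qed
    qed
  qed
  have BI: "bochner_integrable_on S f"
  proof -
    define L where "L = lebesgue_on S"
    have spaceL': "space L = S" unfolding L_def by (rule spaceL)
    define Bm where "Bm = (\<lambda>n m. {t\<in>S. m \<le> K n t})"
    have Bms: "Bm n m \<in> sets L" for n m
    proof -
      have "K n -` {m..} \<inter> space L \<in> sets L" unfolding L_def using measurable_sets[OF Km[of n], of "{m..}"] by simp
      moreover have "K n -` {m..} \<inter> space L = Bm n m" unfolding Bm_def using spaceL' by auto
      ultimately show ?thesis by simp
    qed
    have dec: "decseq (Bm n)" for n unfolding Bm_def decseq_def by auto
    have inter: "(\<Inter>m. Bm n m) = {}" for n
    proof -
      { fix t assume "t \<in> (\<Inter>m. Bm n m)"
        then have "Suc (K n t) \<le> K n t" unfolding Bm_def by blast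
        then have False by simp }
      then show ?thesis by blast
    qed
    have LS: "emeasure L S = 1" unfolding L_def S_def by (simp add: emeasure_restrict_space)
    have fin: "emeasure L (Bm n m) \<noteq> \<infinity>" for n m
    proof -
      have "emeasure L (Bm n m) \<le> emeasure L S"
        using Bms spaceL' by (intro emeasure_mono) (auto simp: Bm_def)
      then show ?thesis using LS by (auto simp: top_unique)
    qed
    have lim: "(\<lambda>m. emeasure L (Bm n m)) \<longlonglongrightarrow> 0" for n
      using Lim_emeasure_decseq[of "Bm n" L] Bms dec fin inter by auto
    have "\<exists>m. emeasure L (Bm n m) < ennreal (inverse (real (Suc n)))" for n
    proof -
      have "0 < ennreal (inverse (real (Suc n)))" by simp
      then have "eventually (\<lambda>m. emeasure L (Bm n m) < ennreal (inverse (real (Suc n)))) sequentially"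
        using order_tendstoD(2)[OF lim] by blast
      then show ?thesis by (auto simp: eventually_sequentially)
    qed
    then obtain mm where mm: "\<And>n. emeasure L (Bm n (mm n)) < ennreal (inverse (real (Suc n)))" by metis
    define C' where "C' = max C 0"
    define s where "s = (\<lambda>n t. if K n t < mm n then e (K n t) else 0)"
    have sm: "s n \<in> measurable L (count_space UNIV)" for n
    proof -
      have "(\<lambda>t. (\<lambda>k. if k < mm n then e k else 0) (K n t)) \<in> measurable L (count_space UNIV)"
        unfolding L_def by (rule measurable_compose[OF Km measurable_count_space])
      then show ?thesis unfolding s_def by simp
    qed
    have I_bnd: "(\<integral>\<^sup>+ t. ennreal (norm (f t - s n t)) \<partial>L) \<le>
        ennreal (inverse (real (Suc n))) + ennreal C' * ennreal (inverse (real (Suc n)))" for n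
    proof -
      have "(\<integral>\<^sup>+ t. ennreal (norm (f t - s n t)) \<partial>L) \<le>
          (\<integral>\<^sup>+ t. (ennreal (inverse (real (Suc n))) + ennreal C' * indicator (Bm n (mm n)) t) \<partial>L)"
      proof (rule nn_integral_mono)
        fix t assume "t \<in> space L"
        then have t: "t \<in> S" using spaceL' by simp
        show "ennreal (norm (f t - s n t)) \<le> ennreal (inverse (real (Suc n))) + ennreal C' * indicator (Bm n (mm n)) t"
        proof (cases "K n t < mm n")
          case True
          then have "norm (f t - s n t) \<le> inverse (real (Suc n))" using Kp[OF t, of n] unfolding s_def by simp
          then have "ennreal (norm (f t - s n t)) \<le> ennreal (inverse (real (Suc n)))" by (rule ennreal_leI)
          then show ?thesis by (rule order_trans) simp
        next
          case False
          then have "t \<in> Bm n (mm n)" using t unfolding Bm_def by simp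
          moreover have "norm (f t - s n t) \<le> C'" using False bnd[of t] t unfolding s_def C'_def S_def by simp
          ultimately have "ennreal (norm (f t - s n t)) \<le> ennreal C' * indicator (Bm n (mm n)) t"
            by (simp add: ennreal_leI)
          then show ?thesis by (rule order_trans) simp
        qed
      qed
      also have "\<dots> = ennreal (inverse (real (Suc n))) * emeasure L (space L) + ennreal C' * emeasure L (Bm n (mm n))"
        using Bms by (subst nn_integral_add) (auto simp: nn_integral_cmult_indicator)
      also have "\<dots> \<le> ennreal (inverse (real (Suc n))) + ennreal C' * ennreal (inverse (real (Suc n)))"
        using spaceL' LS mm[of n] by (intro add_mono mult_left_mono) auto
      finally show ?thesis .
    qed
    have U: "(\<lambda>n. ennreal (inverse (real (Suc n))) + ennreal C' * ennreal (inverse (real (Suc n)))) \<longlonglongrightarrow> 0"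
    proof -
      have a: "(\<lambda>n. ennreal (inverse (real (Suc n)))) \<longlonglongrightarrow> 0"
        using tendsto_ennrealI[OF LIMSEQ_inverse_real_of_nat] by simp
      have b: "(\<lambda>n. ennreal C' * ennreal (inverse (real (Suc n)))) \<longlonglongrightarrow> ennreal C' * 0"
        by (rule ennreal_tendsto_cmult[OF _ a]) simp
      show ?thesis using tendsto_add[OF a b] by simp
    qed
    show ?thesis unfolding bochner_integrable_on_def L_def[symmetric]
    proof (intro exI[of _ s] conjI allI)
      fix n v
      have "s n ` S \<subseteq> insert 0 (e ` {..<mm n})" unfolding s_def by auto
      then show "finite (s n ` S)" by (rule finite_subset) simp
      show "{t\<in>S. s n t = v} \<in> sets lebesgue" using levelset sm unfolding L_def by blast
    next
      fix n
      have "(\<lambda>t. (\<lambda>k t. norm (f t - (if k < mm n then e k else 0))) (K n t) t) \<in> borel_measurable L"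
      proof (rule measurable_compose_countable[OF _ Km[unfolded L_def[symmetric]]])
        fix k
        show "(\<lambda>t. norm (f t - (if k < mm n then e k else 0))) \<in> borel_measurable L"
          using hm[of k] hmeas[OF Q0] unfolding L_def by (cases "k < mm n") auto
      qed
      then show "(\<lambda>t. norm (f t - s n t)) \<in> borel_measurable L" unfolding s_def by simp
    next
      show "(\<lambda>n. \<integral>\<^sup>+ t. ennreal (norm (f t - s n t)) \<partial>L) \<longlonglongrightarrow> 0"
        by (rule tendsto_sandwich[OF _ _ tendsto_const U]) (simp_all add: always_eventually I_bnd del: of_nat_Suc)
    qed
  qed
  show ?thesis using SM BI unfolding S_def by simp
qed

theorem lemma2p2:
  fixes M :: "('h::chilbert \<Rightarrow>\<^sub>L 'h) set"
    and \<phi> :: "real \<Rightarrow> ('h \<Rightarrow>\<^sub>L 'h) \<Rightarrow> ('h \<Rightarrow>\<^sub>L 'h)"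
    and \<xi> :: 'h
    and A :: "'h \<Rightarrow>\<^sub>L 'h"
  assumes "von_neumann_algebra M"
    and "cp_semigroup M \<phi>"
    and "A \<in> M"
  shows "strongly_measurable_on {0..1} (\<lambda>t. blinfun_apply (\<phi> t A) \<xi>)
       \<and> bochner_integrable_on {0..1} (\<lambda>t. blinfun_apply (\<phi> t A) \<xi>)"
proof (rule main_generic[where C = "norm A * norm \<xi>"])
  have cl: "\<forall>A\<in>M. \<forall>\<omega>\<in>predual M. \<forall>t0\<ge>0. ((\<lambda>t. \<omega> (\<phi> t A)) \<longlongrightarrow> \<omega> (\<phi> t0 A)) (at t0 within {0..})"
    using assms(2) unfolding cp_semigroup_def by (elim conjE) assumption
  fix \<eta> :: 'h
  have lim: "((\<lambda>t. cinner \<eta> (blinfun_apply (\<phi> t A) \<xi>)) \<longlongrightarrow> cinner \<eta> (blinfun_apply (\<phi> t0 A) \<xi>)) (at t0 within {0..})"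
    if "t0 \<ge> 0" for t0
    using cl[rule_format, OF assms(3) vec_predual[of \<eta> \<xi> M] that] by simp
  have "continuous_on {0..} (\<lambda>t. inner \<eta> (blinfun_apply (\<phi> t A) \<xi>))"
    unfolding continuous_on_def
  proof
    fix t0 :: real assume "t0 \<in> {0..}"
    then have "((\<lambda>t. Re (cinner \<eta> (blinfun_apply (\<phi> t A) \<xi>))) \<longlongrightarrow> Re (cinner \<eta> (blinfun_apply (\<phi> t0 A) \<xi>))) (at t0 within {0..})"
      using lim by (intro tendsto_Re) auto
    then show "((\<lambda>t. inner \<eta> (blinfun_apply (\<phi> t A) \<xi>)) \<longlongrightarrow> inner \<eta> (blinfun_apply (\<phi> t0 A) \<xi>)) (at t0 within {0..})"
      by (simp add: Re_cinner)
  qed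
  then show "continuous_on {0..1} (\<lambda>t. inner \<eta> (blinfun_apply (\<phi> t A) \<xi>))"
    by (rule continuous_on_subset) auto
next
  fix t :: real assume t: "t \<in> {0..1}"
  have cc: "\<forall>t\<ge>0. contractive_normal_cp_map M (\<phi> t)"
    using assms(2) unfolding cp_semigroup_def by (elim conjE) assumption
  have "contractive_normal_cp_map M (\<phi> t)" using cc t by simp
  then have "\<forall>A\<in>M. norm (\<phi> t A) \<le> norm A" unfolding contractive_normal_cp_map_def by (elim conjE) assumption
  then have "norm (\<phi> t A) \<le> norm A" using assms(3) by blast
  then have "norm (\<phi> t A) * norm \<xi> \<le> norm A * norm \<xi>" by (rule mult_right_mono) simp
  then show "norm (blinfun_apply (\<phi> t A) \<xi>) \<le> norm A * norm \<xi>"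
    using norm_blinfun[of "\<phi> t A" \<xi>] by linarith
qed

end
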